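(* Let $G$ be a Hausdorff topological group with neutral element $e$ that is not NSS, and let $d:G\times G\to[0,\infty)$ be a continuous map with $d(e,e)=0$. Then there exists a sequence $(g_n)_{n\in\mathbb N}$ in $G\setminus\{e\}$ such that $\sum_{n\in\mathbb N} d(e,g_n^{m_n})<\infty$ for every sequence $(m_n)_{n\in\mathbb N}\in\mathbb Z^{\mathbb N}$.
   Context: A topological group $G$ is NSS if some neighborhood of $e$ contains no nontrivial subgroup of $G$. *)

theory Defs
  imports "HOL-Analysis.Analysis"
begin

text \<open>Topological groups are modelled by the type class topological_group_add
(a possibly non-commutative group written additively, with continuous addition and
negation); the neutral element e is 0 and g^m is written zpow_add m g.\<close>

definition is_subgroup_add :: "'a::group_add set \<Rightarrow> bool" where
  "is_subgroup_add H \<longleftrightarrow> 0 \<in> H \<and> (\<forall>x\<in>H. \<forall>y\<in>H. x + y \<in> H) \<and> (\<forall>x\<in>H. - x \<in> H)"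

definition NSS :: "'a::topological_group_add itself \<Rightarrow> bool" where
  "NSS _ \<longleftrightarrow> (\<exists>U::'a set. (\<exists>V. open V \<and> 0 \<in> V \<and> V \<subseteq> U) \<and>
      \<not> (\<exists>H. is_subgroup_add H \<and> H \<noteq> {0} \<and> H \<subseteq> U))"

definition zpow_add :: "int \<Rightarrow> 'a::group_add \<Rightarrow> 'a" where
  "zpow_add m g = (if 0 \<le> m then ((\<lambda>x. g + x) ^^ nat m) 0
                   else - (((\<lambda>x. g + x) ^^ nat (- m)) 0))"

end

theory Submission
  imports Defs
begin

lemma iter_in_sub:
  assumes "is_subgroup_add H" "g \<in> H"
  shows "((\<lambda>x. g + x) ^^ k) 0 \<in> H"
  using assms by (induction k) (auto simp: is_subgroup_add_def)

lemma zpow_in_sub: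
  assumes "is_subgroup_add H" "g \<in> H"
  shows "zpow_add m g \<in> H"
  using iter_in_sub[OF assms] assms(1) by (auto simp: zpow_add_def is_subgroup_add_def)

theorem lemma5p2:
  fixes d :: "'a::{topological_group_add, t2_space} \<Rightarrow> 'a \<Rightarrow> real"
  assumes notNSS: "\<not> NSS TYPE('a)"
    and d_nonneg: "\<And>x y. d x y \<ge> 0"
    and d_cont: "continuous_on UNIV (\<lambda>p. d (fst p) (snd p))"
    and d_ee: "d 0 0 = 0"
  shows "\<exists>g :: nat \<Rightarrow> 'a. (\<forall>n. g n \<noteq> 0) \<and>
           (\<forall>m :: nat \<Rightarrow> int. summable (\<lambda>n. d 0 (zpow_add (m n) (g n))))"
proof -
  have c0: "continuous_on UNIV (\<lambda>x::'a. d 0 x)"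
  proof -
    have "continuous_on UNIV ((\<lambda>p. d (fst p) (snd p)) \<circ> (\<lambda>x::'a. (0::'a, x)))"
      by (rule continuous_on_compose) (auto intro!: continuous_intros
          intro: continuous_on_subset[OF d_cont])
    then show ?thesis by (simp add: o_def)
  qed
  have "\<forall>n. \<exists>g. g \<noteq> 0 \<and> (\<forall>m. d 0 (zpow_add m g) < (1/2)^n)"
  proof
    fix n :: nat
    define U where "U = (\<lambda>x::'a. d 0 x) -` {..<(1/2::real)^n}"
    have oU: "open U" unfolding U_def by (rule open_vimage[OF _ c0]) simp
    have "0 \<in> U" unfolding U_def using d_ee by simp
    with oU notNSS obtain H where H: "is_subgroup_add H" "H \<noteq> {0}" "H \<subseteq> U"
      unfolding NSS_def by blast
    then obtain g where g: "g \<in> H" "g \<noteq> 0" unfolding is_subgroup_add_def by blast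
    show "\<exists>g. g \<noteq> 0 \<and> (\<forall>m. d 0 (zpow_add m g) < (1/2)^n)"
      using g zpow_in_sub[OF H(1) g(1)] H(3) unfolding U_def by blast
  qed
  then obtain g where g: "\<And>n. g n \<noteq> 0" "\<And>n m. d 0 (zpow_add m (g n)) < (1/2)^n"
    by metis
  show ?thesis
  proof (intro exI conjI allI)
    fix n show "g n \<noteq> 0" by (rule g(1))
  next
    fix m :: "nat \<Rightarrow> int"
    show "summable (\<lambda>n. d 0 (zpow_add (m n) (g n)))"
      by (rule summable_comparison_test[where g="\<lambda>n. (1/2::real)^n"])
        (use g(2) d_nonneg in \<open>auto intro: less_imp_le\<close>)
  qed
qed

end
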